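(* Let $(G,\sigma)$ be an RBMG explained by the leaf-colored tree $(T,\sigma)$. If $(T,\sigma)$ is least resolved w.r.t. $(G,\sigma)$, then every inner edge $e=uv\in E(T)$ (with $v$ a child of $u$) satisfies $\sigma(L(T(v)))\cap\sigma(L(T(u))\setminus L(T(v)))\ne\emptyset$.
   Context: A planted phylogenetic tree $T$ is a rooted tree with distinguished root $0_T$ of degree $1$, all other non-leaf vertices of degree $\ge3$; $L(T)$ its leaves (excluding $0_T$), $|L(T)|\ge2$, $V^0(T)$ its inner vertices; an inner edge is an edge with both endpoints in $V^0(T)$. $\preceq_T$ is the ancestor order towards $0_T$; $T(v)$, $\mathrm{child}(v)$, $\mathrm{lca}_T$ as usual. $\sigma$ maps $L(T)$ to a set of colors. A leaf $y$ is a best match of leaf $x$ if $\sigma(x)\ne\sigma(y)$ and $\mathrm{lca}_T(x,y)\preceq_T\mathrm{lca}_T(x,y')$ for all leaves $y'$ with $\sigma(y')=\sigma(y)$; the RBMG $G(T,\sigma)$ is the undirected vertex-colored graph on $L(T)$ whose edges are the reciprocal best match pairs. $(T,\sigma)$ explains $(G,\sigma)$ if $G(T,\sigma)=(G,\sigma)$. $(T,\sigma)$ is least resolved if for every inner edge $e$, the tree $T_e$ obtained by contracting $e$ satisfies $G(T_e,\sigma)\ne G(T,\sigma)$. *)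

theory Defs
  imports Main
begin

text \<open>A rooted tree is represented by a finite vertex set V, a parent map par and
  a root r (the planted root 0_T), with the convention par r = r.\<close>

definition children :: "'v set \<Rightarrow> ('v \<Rightarrow> 'v) \<Rightarrow> 'v \<Rightarrow> 'v \<Rightarrow> 'v set" where
  "children V par r x = {w \<in> V. w \<noteq> r \<and> par w = x}"

definition leaves :: "'v set \<Rightarrow> ('v \<Rightarrow> 'v) \<Rightarrow> 'v \<Rightarrow> 'v set" where
  "leaves V par r = {x \<in> V. x \<noteq> r \<and> children V par r x = {}}"

definition inner_vertices :: "'v set \<Rightarrow> ('v \<Rightarrow> 'v) \<Rightarrow> 'v \<Rightarrow> 'v set" where
  "inner_vertices V par r = V - leaves V par r - {r}"

definition planted_phylo :: "'v set \<Rightarrow> ('v \<Rightarrow> 'v) \<Rightarrow> 'v \<Rightarrow> bool" where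
  "planted_phylo V par r \<longleftrightarrow>
     finite V \<and> r \<in> V \<and> par r = r \<and>
     (\<forall>x \<in> V - {r}. par x \<in> V) \<and>
     (\<forall>x \<in> V. \<exists>n. (par ^^ n) x = r) \<and>
     card (children V par r r) = 1 \<and>
     (\<forall>x \<in> V - {r}. children V par r x \<noteq> {} \<longrightarrow> card (children V par r x) \<ge> 2) \<and>
     card (leaves V par r) \<ge> 2"

definition anc_le :: "('v \<Rightarrow> 'v) \<Rightarrow> 'v \<Rightarrow> 'v \<Rightarrow> bool" where
  "anc_le par x y \<longleftrightarrow> (\<exists>n. (par ^^ n) x = y)"

definition lca :: "'v set \<Rightarrow> ('v \<Rightarrow> 'v) \<Rightarrow> 'v \<Rightarrow> 'v \<Rightarrow> 'v" where
  "lca V par x y = (THE z. z \<in> V \<and> anc_le par x z \<and> anc_le par y z \<and>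
      (\<forall>w \<in> V. anc_le par x w \<and> anc_le par y w \<longrightarrow> anc_le par z w))"

definition subtree_leaves :: "'v set \<Rightarrow> ('v \<Rightarrow> 'v) \<Rightarrow> 'v \<Rightarrow> 'v \<Rightarrow> 'v set" where
  "subtree_leaves V par r v = {x \<in> leaves V par r. anc_le par x v}"

definition best_match :: "'v set \<Rightarrow> ('v \<Rightarrow> 'v) \<Rightarrow> 'v \<Rightarrow> ('v \<Rightarrow> 'c) \<Rightarrow> 'v \<Rightarrow> 'v \<Rightarrow> bool" where
  "best_match V par r \<sigma> x y \<longleftrightarrow>
     x \<in> leaves V par r \<and> y \<in> leaves V par r \<and> \<sigma> x \<noteq> \<sigma> y \<and>
     (\<forall>y' \<in> leaves V par r. \<sigma> y' = \<sigma> y \<longrightarrow>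
        anc_le par (lca V par x y) (lca V par x y'))"

text \<open>Edge set of the RBMG G(T,\<sigma>); its vertex set is the leaf set of T.\<close>
definition rbmg :: "'v set \<Rightarrow> ('v \<Rightarrow> 'v) \<Rightarrow> 'v \<Rightarrow> ('v \<Rightarrow> 'c) \<Rightarrow> 'v set set" where
  "rbmg V par r \<sigma> = {{x, y} | x y. best_match V par r \<sigma> x y \<and> best_match V par r \<sigma> y x}"

text \<open>Contraction of the edge (par v, v): v is removed, its children are attached to par v.\<close>
definition contract_vertices :: "'v set \<Rightarrow> 'v \<Rightarrow> 'v set" where
  "contract_vertices V v = V - {v}"

definition contract_par :: "('v \<Rightarrow> 'v) \<Rightarrow> 'v \<Rightarrow> 'v \<Rightarrow> 'v" where
  "contract_par par v = (\<lambda>w. if par w = v then par v else par w)"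

definition inner_edge :: "'v set \<Rightarrow> ('v \<Rightarrow> 'v) \<Rightarrow> 'v \<Rightarrow> 'v \<Rightarrow> 'v \<Rightarrow> bool" where
  "inner_edge V par r u v \<longleftrightarrow> v \<in> V \<and> v \<noteq> r \<and> par v = u \<and>
     u \<in> inner_vertices V par r \<and> v \<in> inner_vertices V par r"

definition least_resolved :: "'v set \<Rightarrow> ('v \<Rightarrow> 'v) \<Rightarrow> 'v \<Rightarrow> ('v \<Rightarrow> 'c) \<Rightarrow> bool" where
  "least_resolved V par r \<sigma> \<longleftrightarrow>
     (\<forall>u v. inner_edge V par r u v \<longrightarrow>
        rbmg (contract_vertices V v) (contract_par par v) r \<sigma> \<noteq> rbmg V par r \<sigma>)"

end

theory Submission
  imports Defs
begin

lemma anc_refl: "anc_le p x x"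
  unfolding anc_le_def by (rule exI[of _ 0]) simp

lemma anc_trans: "anc_le p a b \<Longrightarrow> anc_le p b c \<Longrightarrow> anc_le p a c"
  unfolding anc_le_def by (metis funpow_add comp_apply)

lemma anc_par: "anc_le p a (p a)"
  unfolding anc_le_def by (rule exI[of _ 1]) simp

lemma anc_cases: "anc_le p a b \<Longrightarrow> b = a \<or> anc_le p (p a) b"
  unfolding anc_le_def
proof -
  assume "\<exists>n. (p ^^ n) a = b"
  then obtain n where n: "(p ^^ n) a = b" by blast
  show "b = a \<or> (\<exists>n. (p ^^ n) (p a) = b)"
  proof (cases n)
    case 0 then show ?thesis using n by simp
  next
    case (Suc m) then show ?thesis using n by (metis funpow_Suc_right comp_apply)
  qed
qed

lemma anc_total: "anc_le p x a \<Longrightarrow> anc_le p x b \<Longrightarrow> anc_le p a b \<or> anc_le p b a"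
  unfolding anc_le_def
proof -
  assume "\<exists>n. (p ^^ n) x = a" "\<exists>n. (p ^^ n) x = b"
  then obtain i j where i: "(p ^^ i) x = a" and j: "(p ^^ j) x = b" by blast
  show "(\<exists>n. (p ^^ n) a = b) \<or> (\<exists>n. (p ^^ n) b = a)"
  proof (cases "i \<le> j")
    case True
    then have "(p ^^ (j - i)) a = b" using i j by (metis funpow_add comp_apply le_add_diff_inverse2)
    then show ?thesis by blast
  next
    case False
    then have "(p ^^ (i - j)) b = a" using i j
      by (metis funpow_add comp_apply le_add_diff_inverse2 nat_le_linear)
    then show ?thesis by blast
  qed
qed

lemma funpow_fix: "p r = r \<Longrightarrow> (p ^^ n) r = r"
  by (induct n) auto

lemma anc_antisym:
  assumes pr: "p r = r" and ar: "anc_le p a r" and ab: "anc_le p a b" and ba: "anc_le p b a"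
  shows "a = b"
proof -
  obtain n where n: "(p ^^ n) a = r" using ar unfolding anc_le_def by blast
  obtain i where i: "(p ^^ i) a = b" using ab unfolding anc_le_def by blast
  obtain j where j: "(p ^^ j) b = a" using ba unfolding anc_le_def by blast
  have c: "(p ^^ (j + i)) a = a" using i j by (simp add: funpow_add)
  have k: "(p ^^ (k * (j + i))) a = a" for k
  proof (induct k)
    case 0 then show ?case by simp
  next
    case (Suc k)
    have "(p ^^ (Suc k * (j + i))) a = (p ^^ (j + i)) ((p ^^ (k * (j + i))) a)"
      by (simp add: funpow_add)
    then show ?case using Suc c by simp
  qed
  show ?thesis
  proof (cases "j + i = 0")
    case True then show ?thesis using i by simp
  next
    case False
    then have le: "n \<le> n * (j + i)" by (cases "j + i") auto
    have "(p ^^ (n * (j + i))) a = (p ^^ (n * (j + i) - n)) ((p ^^ n) a)"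
      using le by (metis funpow_add comp_apply le_add_diff_inverse2)
    also have "\<dots> = r" using n funpow_fix[of p r, OF pr] by simp
    finally have "a = r" using k by simp
    then show ?thesis using i funpow_fix[of p r, OF pr] by simp
  qed
qed

lemma lca_eqI:
  assumes anti: "\<And>a b. a \<in> V \<Longrightarrow> anc_le p a b \<Longrightarrow> anc_le p b a \<Longrightarrow> a = b"
    and z: "z \<in> V" "anc_le p x z" "anc_le p y z"
    and m: "\<forall>w \<in> V. anc_le p x w \<and> anc_le p y w \<longrightarrow> anc_le p z w"
  shows "lca V p x y = z"
  unfolding lca_def
proof (rule the_equality)
  show "z \<in> V \<and> anc_le p x z \<and> anc_le p y z \<and> (\<forall>w\<in>V. anc_le p x w \<and> anc_le p y w \<longrightarrow> anc_le p z w)"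
    using z m by blast
next
  fix z' assume h: "z' \<in> V \<and> anc_le p x z' \<and> anc_le p y z' \<and> (\<forall>w\<in>V. anc_le p x w \<and> anc_le p y w \<longrightarrow> anc_le p z' w)"
  then have "anc_le p z' z" "anc_le p z z'" using z m by blast+
  then show "z' = z" using anti h by blast
qed

lemma funpow_in:
  assumes "\<And>w. w \<in> V \<Longrightarrow> p w \<in> V" "x \<in> V"
  shows "(p ^^ i) x \<in> V"
  using assms by (induct i) auto

lemma lca_exists:
  assumes cl: "\<And>w. w \<in> V \<Longrightarrow> p w \<in> V" and x: "x \<in> V" and xr: "anc_le p x r" and yr: "anc_le p y r"
  shows "\<exists>z\<in>V. anc_le p x z \<and> anc_le p y z \<and> (\<forall>w\<in>V. anc_le p x w \<and> anc_le p y w \<longrightarrow> anc_le p z w)"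
proof -
  obtain n where n: "(p ^^ n) x = r" using xr unfolding anc_le_def by blast
  define P where "P i = anc_le p y ((p ^^ i) x)" for i
  have Pn: "P n" using n yr P_def by simp
  define i0 where "i0 = (LEAST i. P i)"
  have Pi0: "P i0" using Pn i0_def by (metis LeastI)
  define z where "z = (p ^^ i0) x"
  have "z \<in> V" using funpow_in[OF cl x] z_def by simp
  moreover have "anc_le p x z" unfolding anc_le_def z_def by blast
  moreover have "anc_le p y z" using Pi0 P_def z_def by simp
  moreover have "\<forall>w\<in>V. anc_le p x w \<and> anc_le p y w \<longrightarrow> anc_le p z w"
  proof (intro ballI impI)
    fix w assume "w \<in> V" "anc_le p x w \<and> anc_le p y w"
    then obtain j where j: "(p ^^ j) x = w" and "anc_le p y w" unfolding anc_le_def by blast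
    then have "P j" using P_def by simp
    then have "i0 \<le> j" using i0_def by (simp add: Least_le)
    then have "(p ^^ (j - i0)) z = w" using j z_def
      by (metis funpow_add comp_apply le_add_diff_inverse2)
    then show "anc_le p z w" unfolding anc_le_def by blast
  qed
  ultimately show ?thesis by blast
qed

lemma contract_par_ne: "par v \<noteq> v \<Longrightarrow> contract_par par v w \<noteq> v"
  unfolding contract_par_def by auto

lemma anc_contract1:
  assumes "anc_le (contract_par par v) x y"
  shows "anc_le par x y"
proof -
  have "\<exists>m. ((contract_par par v) ^^ n) x = (par ^^ m) x" for n
  proof (induct n)
    case 0 then show ?case by (rule exI[of _ 0]) simp
  next
    case (Suc n)
    then obtain m where m: "((contract_par par v) ^^ n) x = (par ^^ m) x" by blast
    show ?case
    proof (cases "par ((par ^^ m) x) = v")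
      case True
      then have "((contract_par par v) ^^ Suc n) x = (par ^^ Suc (Suc m)) x"
        using m by (simp add: contract_par_def)
      then show ?thesis by blast
    next
      case False
      then have "((contract_par par v) ^^ Suc n) x = (par ^^ Suc m) x"
        using m by (simp add: contract_par_def)
      then show ?thesis by blast
    qed
  qed
  moreover obtain n where "((contract_par par v) ^^ n) x = y" using assms unfolding anc_le_def by blast
  ultimately show ?thesis unfolding anc_le_def by metis
qed

lemma anc_contract_ne:
  assumes "par v \<noteq> v" "x \<noteq> v" "anc_le (contract_par par v) x y"
  shows "y \<noteq> v"
proof -
  obtain n where n: "((contract_par par v) ^^ n) x = y" using assms(3) unfolding anc_le_def by blast
  show ?thesis
  proof (cases n)
    case 0 then show ?thesis using n assms by simp
  next
    case (Suc m) then show ?thesis using n contract_par_ne[of par v, OF assms(1)] by auto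
  qed
qed

lemma anc_contract2:
  assumes pv: "par v \<noteq> v"
  shows "x \<noteq> v \<Longrightarrow> (par ^^ m) x = y \<Longrightarrow> y \<noteq> v \<Longrightarrow> anc_le (contract_par par v) x y"
proof (induct m arbitrary: x rule: less_induct)
  case (less m)
  show ?case
  proof (cases m)
    case 0 then show ?thesis using less by (simp add: anc_refl)
  next
    case (Suc k)
    then have k: "(par ^^ k) (par x) = y" using less by (metis funpow_Suc_right comp_apply)
    show ?thesis
    proof (cases "par x = v")
      case False
      then have "anc_le (contract_par par v) (par x) y" using less(1)[of k "par x"] less(4) Suc k by simp
      moreover have "contract_par par v x = par x" using False by (simp add: contract_par_def)
      ultimately show ?thesis by (metis anc_par anc_trans)
    next
      case True
      then obtain k' where k': "k = Suc k'" using k less by (cases k) auto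
      then have "(par ^^ k') (par v) = y" using k True by (metis funpow_Suc_right comp_apply)
      then have "anc_le (contract_par par v) (par v) y" using less(1)[of k' "par v"] less(4) Suc k' pv by simp
      moreover have "contract_par par v x = par v" using True by (simp add: contract_par_def)
      ultimately show ?thesis by (metis anc_par anc_trans)
    qed
  qed
qed

lemma anc_contract_iff:
  assumes "par v \<noteq> v" "x \<noteq> v"
  shows "anc_le (contract_par par v) x y \<longleftrightarrow> anc_le par x y \<and> y \<noteq> v"
proof
  assume "anc_le (contract_par par v) x y"
  then show "anc_le par x y \<and> y \<noteq> v"
    using assms anc_contract1[of par v x y] anc_contract_ne[of par v x y] by simp
next
  assume h: "anc_le par x y \<and> y \<noteq> v"
  then obtain m where "(par ^^ m) x = y" unfolding anc_le_def by blast
  then show "anc_le (contract_par par v) x y" using anc_contract2[of par v x m y, OF assms(1) assms(2)] h by simp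
qed

theorem mainTheorem10:
  fixes V :: "'v set" and par :: "'v \<Rightarrow> 'v" and r :: 'v
    and \<sigma> :: "'v \<Rightarrow> 'c" and G :: "'v set set"
  assumes "planted_phylo V par r"
    and "G = rbmg V par r \<sigma>"
    and "least_resolved V par r \<sigma>"
    and "inner_edge V par r u v"
  shows "\<sigma> ` subtree_leaves V par r v \<inter>
           \<sigma> ` (subtree_leaves V par r u - subtree_leaves V par r v) \<noteq> {}"
proof (rule ccontr)
  assume "\<not> ?thesis"
  then have disj: "\<sigma> ` subtree_leaves V par r v \<inter>
           \<sigma> ` (subtree_leaves V par r u - subtree_leaves V par r v) = {}" by simp
  define p' where "p' = contract_par par v"
  define V' where "V' = contract_vertices V v"
  define L where "L = leaves V par r"
  have rV: "r \<in> V" and pr: "par r = r" and parV0: "\<forall>x \<in> V - {r}. par x \<in> V"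
    and reach0: "\<forall>x \<in> V. \<exists>n. (par ^^ n) x = r"
    using assms(1) unfolding planted_phylo_def by blast+
  have parV: "\<And>w. w \<in> V \<Longrightarrow> par w \<in> V" using parV0 pr rV by (metis DiffI singletonD)
  have reach: "\<And>w. w \<in> V \<Longrightarrow> anc_le par w r" using reach0 unfolding anc_le_def by blast
  have vV: "v \<in> V" and vr: "v \<noteq> r" and pv: "par v = u" and uin: "u \<in> inner_vertices V par r"
    and vin: "v \<in> inner_vertices V par r"
    using assms(4) unfolding inner_edge_def by blast+
  have uV: "u \<in> V" and u_nl: "u \<notin> L" and v_nl: "v \<notin> L"
    using uin vin unfolding inner_vertices_def L_def by blast+
  have uv: "u \<noteq> v"
  proof
    assume "u = v"
    then have "par v = v" using pv by simp
    then have "(par ^^ n) v = v" for n using funpow_fix[of par v] by simp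
    then show False using reach[OF vV] vr unfolding anc_le_def by metis
  qed
  have pvv: "par v \<noteq> v" using pv uv by simp
  have LV: "\<And>x. x \<in> L \<Longrightarrow> x \<in> V \<and> x \<noteq> v \<and> x \<noteq> r"
    using v_nl unfolding L_def leaves_def by blast
  have anti: "\<And>a b. a \<in> V \<Longrightarrow> anc_le par a b \<Longrightarrow> anc_le par b a \<Longrightarrow> a = b"
    using anc_antisym[of par r] pr reach by blast
  have iff: "\<And>x y. x \<noteq> v \<Longrightarrow> anc_le p' x y \<longleftrightarrow> anc_le par x y \<and> y \<noteq> v"
    unfolding p'_def using anc_contract_iff[of par v] pvv by blast
  have p'r: "p' r = r" unfolding p'_def contract_par_def using pr vr by simp
  have V'_def2: "V' = V - {v}" unfolding V'_def contract_vertices_def by simp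
  have anti': "\<And>a b. a \<in> V' \<Longrightarrow> anc_le p' a b \<Longrightarrow> anc_le p' b a \<Longrightarrow> a = b"
  proof -
    fix a b assume a: "a \<in> V'" and ab: "anc_le p' a b" and ba: "anc_le p' b a"
    have "anc_le p' a r" using iff[of a r] a V'_def2 reach vr by blast
    then show "a = b" using anc_antisym[of p' r a b] p'r ab ba by blast
  qed
  have uw: "\<And>w. anc_le par v w \<Longrightarrow> w \<noteq> v \<Longrightarrow> anc_le par u w"
    using anc_cases[of par v] pv by blast
  have vu: "anc_le par v u" using anc_par[of par v] pv by simp
  have leaves_eq: "leaves V' p' r = L"
  proof -
    have ch: "\<And>x. x \<in> V' \<Longrightarrow> x \<noteq> r \<Longrightarrow> children V' p' r x = {} \<longleftrightarrow> children V par r x = {}"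
    proof -
      fix x assume x: "x \<in> V'" "x \<noteq> r"
      show "children V' p' r x = {} \<longleftrightarrow> children V par r x = {}"
      proof (cases "x = u")
        case True
        have "v \<in> children V par r x" using True vV vr pv unfolding children_def by simp
        moreover have "children V' p' r x \<noteq> {}"
        proof -
          have "children V par r v \<noteq> {}" using vin vV vr
            unfolding inner_vertices_def leaves_def by blast
          then obtain w where w: "w \<in> V" "w \<noteq> r" "par w = v" unfolding children_def by blast
          then have "w \<noteq> v" using pvv by auto
          then have "w \<in> children V' p' r x" using w True pv
            unfolding children_def V'_def2 p'_def contract_par_def by simp
          then show ?thesis by blast
        qed
        ultimately show ?thesis by blast
      next
        case False
        have "children V' p' r x = children V par r x"
          unfolding children_def V'_def2 p'_def contract_par_def using False x pv V'_def2 by auto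
        then show ?thesis by simp
      qed
    qed
    show ?thesis
    proof
      show "leaves V' p' r \<subseteq> L"
        unfolding L_def using ch unfolding leaves_def V'_def2 by blast
      show "L \<subseteq> leaves V' p' r"
      proof
        fix x assume x: "x \<in> L"
        then have "x \<in> V'" "x \<noteq> r" using LV V'_def2 by auto
        then show "x \<in> leaves V' p' r" using ch x unfolding leaves_def L_def by blast
      qed
    qed
  qed
  have lca_spec: "\<And>x y. x \<in> V \<Longrightarrow> y \<in> V \<Longrightarrow> lca V par x y \<in> V \<and> anc_le par x (lca V par x y)
      \<and> anc_le par y (lca V par x y) \<and>
      (\<forall>w\<in>V. anc_le par x w \<and> anc_le par y w \<longrightarrow> anc_le par (lca V par x y) w)"
  proof -
    fix x y assume x: "x \<in> V" and y: "y \<in> V"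
    obtain z where z: "z\<in>V" "anc_le par x z" "anc_le par y z"
      "\<forall>w\<in>V. anc_le par x w \<and> anc_le par y w \<longrightarrow> anc_le par z w"
      using lca_exists[of V par x r y] parV x reach[OF x] reach[OF y] by blast
    have "lca V par x y = z" using lca_eqI[of V par z x y] anti z by blast
    then show "?thesis x y" using z by simp
  qed
  define f where "f a = (if a = v then u else a)" for a
  have lca'_eq: "\<And>x y. x \<in> L \<Longrightarrow> y \<in> L \<Longrightarrow> lca V' p' x y = f (lca V par x y)"
  proof -
    fix x y assume x: "x \<in> L" and y: "y \<in> L"
    define z where "z = lca V par x y"
    have z: "z \<in> V" "anc_le par x z" "anc_le par y z"
      "\<forall>w\<in>V. anc_le par x w \<and> anc_le par y w \<longrightarrow> anc_le par z w"
      using lca_spec[of x y] LV x y z_def by auto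
    have fzV: "f z \<in> V'" using z uV uv V'_def2 f_def by auto
    have fzv: "f z \<noteq> v" using uv f_def by auto
    have xz: "anc_le par x (f z)" using z(2) vu anc_trans[of par x v u] f_def by auto
    have yz: "anc_le par y (f z)" using z(3) vu anc_trans[of par y v u] f_def by auto
    have "anc_le p' x (f z)" using iff[of x "f z"] LV[OF x] xz fzv by blast
    moreover have "anc_le p' y (f z)" using iff[of y "f z"] LV[OF y] yz fzv by blast
    moreover have "\<forall>w\<in>V'. anc_le p' x w \<and> anc_le p' y w \<longrightarrow> anc_le p' (f z) w"
    proof (intro ballI impI)
      fix w assume w: "w \<in> V'" "anc_le p' x w \<and> anc_le p' y w"
      then have wv: "w \<noteq> v" "w \<in> V" using V'_def2 by auto
      have "anc_le par x w" "anc_le par y w" using w iff LV[OF x] LV[OF y] by blast+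
      then have zw: "anc_le par z w" using z(4) wv by blast
      have "anc_le par (f z) w"
      proof (cases "z = v")
        case True then show ?thesis using uw[of w] zw wv f_def by simp
      next
        case False then show ?thesis using zw f_def by simp
      qed
      then show "anc_le p' (f z) w" using iff[of "f z" w] fzv wv by blast
    qed
    ultimately have "lca V' p' x y = f z" using lca_eqI[of V' p' "f z" x y] anti' fzV by blast
    then show "lca V' p' x y = f (lca V par x y)" using z_def by simp
  qed
  have cmp: "\<And>x y y'. x \<in> L \<Longrightarrow> y \<in> L \<Longrightarrow> y' \<in> L \<Longrightarrow> \<sigma> y' = \<sigma> y \<Longrightarrow>
      anc_le p' (lca V' p' x y) (lca V' p' x y') \<longleftrightarrow> anc_le par (lca V par x y) (lca V par x y')"
  proof -
    fix x y y' assume x: "x \<in> L" and y: "y \<in> L" and y': "y' \<in> L" and col: "\<sigma> y' = \<sigma> y"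
    define a where "a = lca V par x y"
    define b where "b = lca V par x y'"
    have a: "a \<in> V" "anc_le par x a" "anc_le par y a"
      "\<forall>w\<in>V. anc_le par x w \<and> anc_le par y w \<longrightarrow> anc_le par a w"
      using lca_spec[of x y] LV x y a_def by auto
    have b: "b \<in> V" "anc_le par x b" "anc_le par y' b"
      using lca_spec[of x y'] LV x y' b_def by auto
    have "anc_le p' (lca V' p' x y) (lca V' p' x y') \<longleftrightarrow> anc_le p' (f a) (f b)"
      using lca'_eq x y y' a_def b_def by simp
    also have "\<dots> \<longleftrightarrow> anc_le par (f a) (f b)"
      using iff[of "f a" "f b"] uv f_def by auto
    also have "\<dots> \<longleftrightarrow> anc_le par a b"
    proof (cases "a = v")
      case av: True
      show ?thesis
      proof (cases "b = v")
        case True then show ?thesis using av f_def by (simp add: anc_refl)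
      next
        case False
        then show ?thesis using av f_def uw[of b] vu anc_trans[of par v u b] by auto
      qed
    next
      case av: False
      show ?thesis
      proof (cases "b = v")
        case bv: True
        have "anc_le par a u \<longleftrightarrow> anc_le par a v"
        proof
          assume au: "anc_le par a u"
          show "anc_le par a v"
          proof (rule ccontr)
            assume nav: "\<not> anc_le par a v"
            then have "anc_le par v a" using anc_total[of par x a v] a(2) b(2) bv by blast
            then have "anc_le par u a" using uw av by blast
            then have au': "a = u" using anti[of a u] a(1) au by blast
            have "y' \<in> subtree_leaves V par r v" using y' b(3) bv
              unfolding subtree_leaves_def L_def by simp
            moreover have "y \<in> subtree_leaves V par r u - subtree_leaves V par r v"
            proof -
              have "y \<in> subtree_leaves V par r u" using y a(3) au'
                unfolding subtree_leaves_def L_def by simp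
              moreover have "y \<notin> subtree_leaves V par r v"
              proof
                assume "y \<in> subtree_leaves V par r v"
                then have "anc_le par y v" unfolding subtree_leaves_def by simp
                then have "anc_le par a v" using a(4) vV b(2) bv by blast
                then show False using nav by simp
              qed
              ultimately show ?thesis by simp
            qed
            ultimately show False using disj col by blast
          qed
        next
          assume "anc_le par a v"
          then show "anc_le par a u" using vu anc_trans[of par a v u] by blast
        qed
        then show ?thesis using av bv f_def by simp
      next
        case False then show ?thesis using av f_def by simp
      qed
    qed
    finally show "?thesis x y y'" using a_def b_def by simp
  qed
  have bm: "best_match V' p' r \<sigma> = best_match V par r \<sigma>"
  proof (intro ext)
    fix x y
    show "best_match V' p' r \<sigma> x y = best_match V par r \<sigma> x y"
      unfolding best_match_def leaves_eq L_def[symmetric]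
      using cmp[of x y] by blast
  qed
  have "rbmg V' p' r \<sigma> = rbmg V par r \<sigma>" unfolding rbmg_def bm by simp
  moreover have "rbmg V' p' r \<sigma> \<noteq> rbmg V par r \<sigma>"
    using assms(3) assms(4) unfolding least_resolved_def V'_def p'_def by blast
  ultimately show False by simp
qed

end
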